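(* Let $(R(m,d))_{m,d\in\mathbb{N}}$ be a family of graphs as described in the context. Let $d\in\mathbb{N}$ and $\varepsilon>0$. Then for all sufficiently large $m$ and every $\alpha\in[0,1]$, every subgraph $G$ of $R(m,d)$ with at least $(\alpha+2\varepsilon)\cdot e(R(m,d))$ edges satisfies \[ \frac{1}{d}\sum_{\ell=1}^d \frac{e_\ell(G)}{2^{d-1}m^2}\ge\alpha+\varepsilon. \]
   Context: For distinct $x,y\in\{0,1\}^d$, $\delta(x,y)=\min\{i: x_i\ne y_i\}$. For $x\in\{0,1\}^d$ the block $B_x$ is $\{x\}\times[m]$. An edge of a graph on $\{0,1\}^d\times[m]$ joining $B_x$ to $B_y$ with $\delta(x,y)=\ell$ is a level-$\ell$ edge; $e_\ell(G)$ is the number of level-$\ell$ edges of $G$. The family $R(m,d)$ (a graph on $\{0,1\}^d\times[m]$) satisfies: for every $d\in\mathbb{N}$ and $\varepsilon>0$, for all sufficiently large $m$, (i) for every $\ell\in[d]$, $e_\ell(R(m,d))=(1\pm\varepsilon)2^{d-1}m^2$ and $e(R(m,d))=(1\pm\varepsilon)d2^{d-1}m^2$; (ii) for all distinct $x,y$ and $P\subseteq B_x$, $Q\subseteq B_y$ with $|P|,|Q|\ge m^{2/3}$, the number of edges between $P$ and $Q$ is at most $(1+\varepsilon)2^{-d+\delta(x,y)}|P||Q|$. Here $a=(1\pm\varepsilon)b$ means $(1-\varepsilon)b\le a\le(1+\varepsilon)b$. *)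

theory Defs
  imports Complex_Main
begin

text \<open>Vertices of the graph on {0,1}^d x [m]: pairs (x, i) with x a boolean list
  of length d (coordinates x_1..x_d stored at list positions 0..d-1) and i in {1..m}.\<close>

type_synonym vert = "bool list \<times> nat"

definition cube :: "nat \<Rightarrow> bool list set" where
  "cube d = {x. length x = d}"

definition verts :: "nat \<Rightarrow> nat \<Rightarrow> vert set" where
  "verts m d = cube d \<times> {1..m}"

definition block :: "nat \<Rightarrow> bool list \<Rightarrow> vert set" where
  "block m x = {x} \<times> {1..m}"

definition is_graph_on :: "vert set \<Rightarrow> vert set set \<Rightarrow> bool" where
  "is_graph_on V E \<longleftrightarrow> E \<subseteq> {{u, v} | u v. u \<in> V \<and> v \<in> V \<and> u \<noteq> v}"

definition delta :: "bool list \<Rightarrow> bool list \<Rightarrow> nat" where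
  "delta x y = Suc (LEAST i. x ! i \<noteq> y ! i)"

definition level_edges :: "nat \<Rightarrow> vert set set \<Rightarrow> vert set set" where
  "level_edges l E = {e \<in> E. \<exists>u v. e = {u, v} \<and> fst u \<noteq> fst v \<and> delta (fst u) (fst v) = l}"

definition e_lev :: "nat \<Rightarrow> vert set set \<Rightarrow> nat" where
  "e_lev l E = card (level_edges l E)"

definition e_between :: "vert set set \<Rightarrow> vert set \<Rightarrow> vert set \<Rightarrow> nat" where
  "e_between E P Q = card {e \<in> E. \<exists>p\<in>P. \<exists>q\<in>Q. e = {p, q}}"

definition approx_eq :: "real \<Rightarrow> real \<Rightarrow> real \<Rightarrow> bool" where
  "approx_eq eps a b \<longleftrightarrow> (1 - eps) * b \<le> a \<and> a \<le> (1 + eps) * b"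

definition R_family :: "(nat \<Rightarrow> nat \<Rightarrow> vert set set) \<Rightarrow> bool" where
  "R_family R \<longleftrightarrow>
     (\<forall>m d. is_graph_on (verts m d) (R m d)) \<and>
     (\<forall>d \<ge> 1. \<forall>eps > 0. \<exists>M. \<forall>m \<ge> M.
        (\<forall>l \<in> {1..d}. approx_eq eps (real (e_lev l (R m d))) (2 ^ (d - 1) * real m ^ 2)) \<and>
        approx_eq eps (real (card (R m d))) (real d * 2 ^ (d - 1) * real m ^ 2) \<and>
        (\<forall>x \<in> cube d. \<forall>y \<in> cube d. \<forall>P Q. x \<noteq> y \<longrightarrow> P \<subseteq> block m x \<longrightarrow> Q \<subseteq> block m y \<longrightarrow>
           real (card P) \<ge> real m powr (2/3) \<longrightarrow> real (card Q) \<ge> real m powr (2/3) \<longrightarrow>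
           real (e_between (R m d) P Q)
             \<le> (1 + eps) * 2 powr (real (delta x y) - real d) * real (card P) * real (card Q)))"

end

theory Submission
  imports Defs
begin

lemma delta_sym: "delta x y = delta y x"
proof -
  have "(\<lambda>i. x ! i \<noteq> y ! i) = (\<lambda>i. y ! i \<noteq> x ! i)" by auto
  then show ?thesis unfolding delta_def by simp
qed

lemma level_edges_sub: "G \<subseteq> E \<Longrightarrow> level_edges l G = G \<inter> level_edges l E"
  unfolding level_edges_def by auto

lemma level_edges_disj:
  assumes "l \<noteq> l'" shows "level_edges l E \<inter> level_edges l' E = {}"
proof (rule ccontr)
  assume "level_edges l E \<inter> level_edges l' E \<noteq> {}"
  then obtain e where "e \<in> level_edges l E" "e \<in> level_edges l' E" by auto
  then obtain u v u' v' where e1: "e = {u,v}" and d1: "delta (fst u) (fst v) = l"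
    and e2: "e = {u',v'}" and d2: "delta (fst u') (fst v') = l'"
    unfolding level_edges_def mem_Collect_eq by metis
  have "{u,v} = {u',v'}" using e1 e2 by simp
  then have "(u = u' \<and> v = v') \<or> (u = v' \<and> v = u')" by (simp add: doubleton_eq_iff)
  then show False
  proof
    assume "u = u' \<and> v = v'" then show False using d1 d2 assms by simp
  next
    assume "u = v' \<and> v = u'" then show False using d1 d2 assms delta_sym[of "fst u" "fst v"] by simp
  qed
qed

lemma sum_levels:
  assumes "finite E"
  shows "(\<Sum>l = 1..d. real (e_lev l E)) = real (card (\<Union>l\<in>{1..d}. level_edges l E))"
proof -
  have fin: "\<And>l. finite (level_edges l E)" using assms unfolding level_edges_def by auto
  have "card (\<Union>l\<in>{1..d}. level_edges l E) = (\<Sum>l = 1..d. card (level_edges l E))"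
    by (rule card_UN_disjoint) (auto simp: fin dest: level_edges_disj)
  then show ?thesis unfolding e_lev_def by simp
qed

theorem proposition2p5:
  fixes R :: "nat \<Rightarrow> nat \<Rightarrow> vert set set" and d :: nat and eps :: real
  assumes "R_family R" and "d \<ge> 1" and "eps > 0"
  shows "\<exists>M. \<forall>m \<ge> M. \<forall>alpha \<in> {0..1::real}. \<forall>G. G \<subseteq> R m d \<longrightarrow>
           real (card G) \<ge> (alpha + 2 * eps) * real (card (R m d)) \<longrightarrow>
           (1 / real d) * (\<Sum>l = 1..d. real (e_lev l G) / (2 ^ (d - 1) * real m ^ 2)) \<ge> alpha + eps"
proof -
  define e' where "e' = eps / (3 + 2 * eps)"
  have e'pos: "e' > 0" using assms(3) unfolding e'_def by simp
  have e'le: "e' * (3 + 2 * eps) = eps" using assms(3) unfolding e'_def by simp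
  have Rf: "\<forall>d \<ge> 1. \<forall>eps > 0. \<exists>M. \<forall>m \<ge> M.
        (\<forall>l \<in> {1..d}. approx_eq eps (real (e_lev l (R m d))) (2 ^ (d - 1) * real m ^ 2)) \<and>
        approx_eq eps (real (card (R m d))) (real d * 2 ^ (d - 1) * real m ^ 2) \<and>
        (\<forall>x \<in> cube d. \<forall>y \<in> cube d. \<forall>P Q. x \<noteq> y \<longrightarrow> P \<subseteq> block m x \<longrightarrow> Q \<subseteq> block m y \<longrightarrow>
           real (card P) \<ge> real m powr (2/3) \<longrightarrow> real (card Q) \<ge> real m powr (2/3) \<longrightarrow>
           real (e_between (R m d) P Q)
             \<le> (1 + eps) * 2 powr (real (delta x y) - real d) * real (card P) * real (card Q))"
    using assms(1) unfolding R_family_def by (rule conjunct2)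
  obtain M1 where M1: "\<forall>m \<ge> M1.
        (\<forall>l \<in> {1..d}. approx_eq e' (real (e_lev l (R m d))) (2 ^ (d - 1) * real m ^ 2)) \<and>
        approx_eq e' (real (card (R m d))) (real d * 2 ^ (d - 1) * real m ^ 2) \<and>
        (\<forall>x \<in> cube d. \<forall>y \<in> cube d. \<forall>P Q. x \<noteq> y \<longrightarrow> P \<subseteq> block m x \<longrightarrow> Q \<subseteq> block m y \<longrightarrow>
           real (card P) \<ge> real m powr (2/3) \<longrightarrow> real (card Q) \<ge> real m powr (2/3) \<longrightarrow>
           real (e_between (R m d) P Q)
             \<le> (1 + e') * 2 powr (real (delta x y) - real d) * real (card P) * real (card Q))"
    using Rf assms(2) e'pos by blast
  obtain M0 where M0: "\<forall>m \<ge> M0.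
        (\<forall>l \<in> {1..d}. approx_eq e' (real (e_lev l (R m d))) (2 ^ (d - 1) * real m ^ 2)) \<and>
        approx_eq e' (real (card (R m d))) (real d * 2 ^ (d - 1) * real m ^ 2)"
    using M1 by blast
  have graph: "\<And>m. is_graph_on (verts m d) (R m d)" using assms(1) unfolding R_family_def by (simp only:)
  show ?thesis
  proof (intro exI[of _ "max M0 1"] allI impI ballI)
    fix m alpha G
    assume m: "max M0 1 \<le> m" and alpha: "alpha \<in> {0..1::real}" and GR: "G \<subseteq> R m d"
      and big: "real (card G) \<ge> (alpha + 2 * eps) * real (card (R m d))"
    define N :: real where "N = 2 ^ (d - 1) * real m ^ 2"
    have Npos: "N > 0" using m unfolding N_def by simp
    have dpos: "real d > 0" using assms(2) by simp
    have finV: "finite (verts m d)"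
    proof -
      have c: "cube d = {xs. set xs \<subseteq> (UNIV::bool set) \<and> length xs = d}"
        unfolding cube_def by auto
      have "finite {xs. set xs \<subseteq> (UNIV::bool set) \<and> length xs = d}"
        by (rule finite_lists_length_eq) simp
      then have "finite (cube d)" by (simp only: c)
      then show ?thesis unfolding verts_def by simp
    qed
    have finR: "finite (R m d)"
    proof -
      have sub: "R m d \<subseteq> Pow (verts m d)" using graph[of m] unfolding is_graph_on_def by auto
      have "finite (Pow (verts m d))" using finV by simp
      then show ?thesis by (rule finite_subset[OF sub])
    qed
    have finG: "finite G" using finR GR by (rule rev_finite_subset)
    define L where "L = (\<Union>l\<in>{1..d}. level_edges l (R m d))"
    have LR: "L \<subseteq> R m d" unfolding L_def level_edges_def by auto
    have LG: "(\<Union>l\<in>{1..d}. level_edges l G) = G \<inter> L"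
      unfolding L_def using level_edges_sub[OF GR] by auto
    define SG where "SG = (\<Sum>l = 1..d. real (e_lev l G))"
    define SR where "SR = (\<Sum>l = 1..d. real (e_lev l (R m d)))"
    define cR where "cR = real (card (R m d))"
    have SGeq: "SG = real (card (G \<inter> L))" unfolding SG_def using sum_levels[OF finG] LG by simp
    have SReq: "SR = real (card L)" unfolding SR_def L_def using sum_levels[OF finR] by simp
    have "card G = card (G \<inter> L) + card (G - L)"
    proof -
      have "G = (G \<inter> L) \<union> (G - L)" by blast
      moreover have "card ((G \<inter> L) \<union> (G - L)) = card (G \<inter> L) + card (G - L)"
        by (rule card_Un_disjoint) (use finG in auto)
      ultimately show ?thesis by simp
    qed
    moreover have "card (G - L) \<le> card (R m d - L)" using finR GR by (intro card_mono) auto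
    moreover have "card (R m d - L) = card (R m d) - card L" using finR LR
      by (simp add: card_Diff_subset rev_finite_subset)
    moreover have "card L \<le> card (R m d)" using finR LR by (simp add: card_mono)
    ultimately have key: "real (card G) \<le> SG + cR - SR"
      unfolding SGeq SReq cR_def by linarith
    have mM: "m \<ge> M0" using m by simp
    have lev: "\<forall>l \<in> {1..d}. (1 - e') * N \<le> real (e_lev l (R m d))"
      using M0 mM unfolding approx_eq_def N_def by blast
    have "(\<Sum>l = 1..d. (1 - e') * N) \<le> SR" unfolding SR_def
      using lev by (intro sum_mono) auto
    then have SRlow: "real d * ((1 - e') * N) \<le> SR" by simp
    have cRb: "(1 - e') * (real d * N) \<le> cR" "cR \<le> (1 + e') * (real d * N)"
      using M0 mM unfolding approx_eq_def N_def cR_def by (auto simp: mult.assoc)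
    define D where "D = real d * N"
    have Dpos: "D > 0" unfolding D_def using dpos Npos by simp
    have SRl: "(1 - e') * D \<le> SR" using SRlow unfolding D_def by (simp add: algebra_simps)
    have a0: "alpha \<ge> 0" "alpha \<le> 1" using alpha by auto
    have "SG \<ge> (alpha + eps) * D"
    proof (cases "alpha + 2 * eps - 1 \<le> 0")
      case True
      have "(alpha + 2 * eps - 1) * cR \<ge> (alpha + 2 * eps - 1) * ((1 + e') * D)"
        using cRb(2) True unfolding D_def by (simp add: mult_left_mono_neg)
      then have "SG \<ge> (alpha + 2 * eps - 1) * ((1 + e') * D) + (1 - e') * D"
        using key big SRl unfolding cR_def by (simp add: algebra_simps)
      moreover have "(alpha + 2 * eps - 1) * ((1 + e') * D) + (1 - e') * D
          = D * (alpha + 2*eps + e' * (alpha + 2 * eps) - 2 * e')" by (simp add: algebra_simps)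
      moreover have "D * (alpha + 2*eps + e' * (alpha + 2 * eps) - 2 * e') \<ge> D * (alpha + eps)"
      proof -
        have "e' * 2 \<le> e' * (3 + 2 * eps)" using e'pos assms(3) by (intro mult_left_mono) auto
        then have h1: "e' * 2 \<le> eps" using e'le by linarith
        have h2: "e' * (alpha + 2 * eps) \<ge> 0" using e'pos a0 assms(3) by simp
        have "alpha + 2*eps + e' * (alpha + 2 * eps) - 2 * e' \<ge> alpha + eps"
          using h1 h2 by linarith
        then show ?thesis using Dpos by (simp add: mult_left_mono)
      qed
      ultimately show ?thesis by (simp add: algebra_simps)
    next
      case False
      have "(alpha + 2 * eps - 1) * cR \<ge> (alpha + 2 * eps - 1) * ((1 - e') * D)"
        using cRb(1) False unfolding D_def by (simp add: mult_left_mono)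
      then have "SG \<ge> (alpha + 2 * eps - 1) * ((1 - e') * D) + (1 - e') * D"
        using key big SRl unfolding cR_def by (simp add: algebra_simps)
      moreover have "(alpha + 2 * eps - 1) * ((1 - e') * D) + (1 - e') * D
          = D * ((alpha + 2*eps) * (1 - e'))" by (simp add: algebra_simps)
      moreover have "D * ((alpha + 2*eps) * (1 - e')) \<ge> D * (alpha + eps)"
      proof -
        have "e' * (alpha + 2 * eps) \<le> e' * (3 + 2 * eps)" using e'pos a0 by (intro mult_left_mono) auto
        then have "e' * (alpha + 2 * eps) \<le> eps" using e'le by linarith
        then have "(alpha + 2*eps) * (1 - e') \<ge> alpha + eps" by (simp add: algebra_simps)
        then show ?thesis using Dpos by (simp add: mult_left_mono)
      qed
      ultimately show ?thesis by (simp add: algebra_simps)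
    qed
    moreover have "(1 / real d) * (\<Sum>l = 1..d. real (e_lev l G) / (2 ^ (d - 1) * real m ^ 2))
        = SG / D"
      unfolding SG_def D_def N_def by (simp add: sum_divide_distrib[symmetric])
    ultimately show "(1 / real d) * (\<Sum>l = 1..d. real (e_lev l G) / (2 ^ (d - 1) * real m ^ 2))
        \<ge> alpha + eps" using Dpos by (simp add: pos_le_divide_eq)
  qed
qed

end
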